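(* Let $X$ be a compact metric space and let $f\colon X\to X$ be an $n$-expansive homeomorphism with the L-shadowing property. Then there exists $\varepsilon>0$ such that $\bar{n}(x,\varepsilon)\cdot n(x,\varepsilon)\leq n$ for every $x\in X$. If, in addition, $f$ is transitive, then $\bar{n}(x,\varepsilon)\cdot n(y,\varepsilon)\leq n$ for every $x,y\in X$.
   Context: Let $(X,d)$ be a compact metric space and $f\colon X\to X$ a homeomorphism. For $x\in X$ and $c>0$: $W^s_c(x)=\{y: d(f^k(y),f^k(x))\leq c\ \forall k\geq0\}$, $W^u_c(x)=\{y: d(f^k(y),f^k(x))\leq c\ \forall k\leq0\}$, $W^s(x)=\{y: d(f^k(y),f^k(x))\to0 \text{ as } k\to\infty\}$, $W^u(x)=\{y: d(f^k(y),f^k(x))\to0 \text{ as } k\to-\infty\}$. $f$ is $n$-expansive if there is $c>0$ such that $W^s_c(x)\cap W^u_c(x)$ has at most $n$ points for every $x\in X$. The number $n(x,\varepsilon)$ of different stable sets in $W^s_\varepsilon(x)$ is the largest cardinality of a subset $E\subset W^s_\varepsilon(x)$ such that any two distinct $y,z\in E$ satisfy $y\notin W^s(z)$ (so any $n(x,\varepsilon)+1$ distinct points of $W^s_\varepsilon(x)$ contain two distinct points in the same stable set). Analogously $\bar n(x,\varepsilon)$ is the largest cardinality of a subset of $W^u_\varepsilon(x)$ whose distinct points lie in pairwise different unstable sets. A $\delta$-pseudo orbit is $(x_k)_{k\in\mathbb{Z}}$ with $d(f(x_k),x_{k+1})<\delta$ for all $k$; a two-sided limit pseudo orbit satisfies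 $d(f(x_k),x_{k+1})\to0$ as $|k|\to\infty$. $z$ $\varepsilon$-shadows $(x_k)$ if $d(f^k(z),x_k)<\varepsilon$ for all $k$, and two-sided limit shadows it if $d(f^k(z),x_k)\to0$ as $|k|\to\infty$. $f$ has the L-shadowing property if for every $\varepsilon>0$ there is $\delta>0$ such that every $\delta$-pseudo orbit that is also a two-sided limit pseudo orbit is both $\varepsilon$-shadowed and two-sided limit shadowed by a single point. $f$ is transitive if for every nonempty open $U,V$ there is $k\in\mathbb{N}$ with $f^k(U)\cap V\neq\emptyset$. *)

theory Defs
  imports "HOL-Analysis.Analysis" "HOL-Library.Extended_Nat"
begin

definition iter :: "('a \<Rightarrow> 'a) \<Rightarrow> int \<Rightarrow> 'a \<Rightarrow> 'a" where
  "iter f k x = (if k \<ge> 0 then (f ^^ nat k) x else (inv f ^^ nat (- k)) x)"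

definition loc_stable :: "('a::metric_space \<Rightarrow> 'a) \<Rightarrow> real \<Rightarrow> 'a \<Rightarrow> 'a set" where
  "loc_stable f c x = {y. \<forall>k::int. k \<ge> 0 \<longrightarrow> dist (iter f k y) (iter f k x) \<le> c}"

definition loc_unstable :: "('a::metric_space \<Rightarrow> 'a) \<Rightarrow> real \<Rightarrow> 'a \<Rightarrow> 'a set" where
  "loc_unstable f c x = {y. \<forall>k::int. k \<le> 0 \<longrightarrow> dist (iter f k y) (iter f k x) \<le> c}"

definition stable_set :: "('a::metric_space \<Rightarrow> 'a) \<Rightarrow> 'a \<Rightarrow> 'a set" where
  "stable_set f x = {y. ((\<lambda>k. dist (iter f k y) (iter f k x)) \<longlongrightarrow> 0) at_top}"

definition unstable_set :: "('a::metric_space \<Rightarrow> 'a) \<Rightarrow> 'a \<Rightarrow> 'a set" where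
  "unstable_set f x = {y. ((\<lambda>k. dist (iter f k y) (iter f k x)) \<longlongrightarrow> 0) at_bot}"

definition n_expansive :: "('a::metric_space \<Rightarrow> 'a) \<Rightarrow> nat \<Rightarrow> bool" where
  "n_expansive f n \<longleftrightarrow> (\<exists>c>0. \<forall>x. finite (loc_stable f c x \<inter> loc_unstable f c x)
      \<and> card (loc_stable f c x \<inter> loc_unstable f c x) \<le> n)"

text \<open>Number of different stable sets in W^s_eps(x): supremum (possibly infinite) of
  cardinalities of subsets whose distinct points lie in pairwise different stable sets.\<close>
definition num_stable :: "('a::metric_space \<Rightarrow> 'a) \<Rightarrow> 'a \<Rightarrow> real \<Rightarrow> enat" where
  "num_stable f x e = Sup {enat (card E) | E. finite E \<and> E \<subseteq> loc_stable f e x \<and>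
      (\<forall>y\<in>E. \<forall>z\<in>E. y \<noteq> z \<longrightarrow> y \<notin> stable_set f z)}"

definition num_unstable :: "('a::metric_space \<Rightarrow> 'a) \<Rightarrow> 'a \<Rightarrow> real \<Rightarrow> enat" where
  "num_unstable f x e = Sup {enat (card E) | E. finite E \<and> E \<subseteq> loc_unstable f e x \<and>
      (\<forall>y\<in>E. \<forall>z\<in>E. y \<noteq> z \<longrightarrow> y \<notin> unstable_set f z)}"

definition pseudo_orbit :: "('a::metric_space \<Rightarrow> 'a) \<Rightarrow> real \<Rightarrow> (int \<Rightarrow> 'a) \<Rightarrow> bool" where
  "pseudo_orbit f d xs \<longleftrightarrow> (\<forall>k. dist (f (xs k)) (xs (k + 1)) < d)"

definition limit_pseudo_orbit :: "('a::metric_space \<Rightarrow> 'a) \<Rightarrow> (int \<Rightarrow> 'a) \<Rightarrow> bool" where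
  "limit_pseudo_orbit f xs \<longleftrightarrow>
     ((\<lambda>k. dist (f (xs k)) (xs (k + 1))) \<longlongrightarrow> 0) at_top \<and>
     ((\<lambda>k. dist (f (xs k)) (xs (k + 1))) \<longlongrightarrow> 0) at_bot"

definition eps_shadows :: "('a::metric_space \<Rightarrow> 'a) \<Rightarrow> real \<Rightarrow> 'a \<Rightarrow> (int \<Rightarrow> 'a) \<Rightarrow> bool" where
  "eps_shadows f e z xs \<longleftrightarrow> (\<forall>k. dist (iter f k z) (xs k) < e)"

definition limit_shadows :: "('a::metric_space \<Rightarrow> 'a) \<Rightarrow> 'a \<Rightarrow> (int \<Rightarrow> 'a) \<Rightarrow> bool" where
  "limit_shadows f z xs \<longleftrightarrow>
     ((\<lambda>k. dist (iter f k z) (xs k)) \<longlongrightarrow> 0) at_top \<and>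
     ((\<lambda>k. dist (iter f k z) (xs k)) \<longlongrightarrow> 0) at_bot"

definition L_shadowing :: "('a::metric_space \<Rightarrow> 'a) \<Rightarrow> bool" where
  "L_shadowing f \<longleftrightarrow> (\<forall>e>0. \<exists>d>0. \<forall>xs. pseudo_orbit f d xs \<and> limit_pseudo_orbit f xs
      \<longrightarrow> (\<exists>z. eps_shadows f e z xs \<and> limit_shadows f z xs))"

definition transitive :: "('a::topological_space \<Rightarrow> 'a) \<Rightarrow> bool" where
  "transitive f \<longleftrightarrow> (\<forall>U V. open U \<and> U \<noteq> {} \<and> open V \<and> V \<noteq> {} \<longrightarrow>
      (\<exists>k::nat. k > 0 \<and> (f ^^ k) ` U \<inter> V \<noteq> {}))"

end

theory Submission imports Defs begin

lemma iter_0[simp]: "iter f 0 x = x"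
  by (simp add: iter_def)

lemma iter_step:
  assumes "bij f"
  shows "f (iter f k x) = iter f (k+1) x"
proof (cases "k \<ge> 0")
  case True
  then have "nat (k+1) = Suc (nat k)" by simp
  with True show ?thesis by (simp add: iter_def)
next
  case False
  define n where "n = nat (- k - 1)"
  have n: "k = - int (Suc n)" using False unfolding n_def by simp
  have ss: "surj f" using assms bij_is_surj by auto
  have "nat (- k) = Suc n" using n by simp
  then have "iter f k x = inv f ((inv f ^^ n) x)" using False by (simp add: iter_def)
  then have "f (iter f k x) = (inv f ^^ n) x" using ss by (simp add: surj_f_inv_f)
  moreover have "iter f (k+1) x = (inv f ^^ n) x"
  proof (cases n)
    case 0 then show ?thesis using n by (simp add: iter_def)
  next
    case (Suc j)
    then have "nat (- (k+1)) = n" "\<not> k + 1 \<ge> 0" using n by auto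
    then show ?thesis by (simp add: iter_def)
  qed
  ultimately show ?thesis by simp
qed

lemma iter_nat: "iter f (int m) x = (f ^^ m) x"
  by (simp add: iter_def)

lemma dist_tri_tendsto:
  fixes a b c :: "'b \<Rightarrow> 'a::metric_space"
  assumes "((\<lambda>k. dist (a k) (b k)) \<longlongrightarrow> 0) F" "((\<lambda>k. dist (c k) (b k)) \<longlongrightarrow> 0) F"
  shows "((\<lambda>k. dist (a k) (c k)) \<longlongrightarrow> 0) F"
proof (rule tendsto_sandwich[of "\<lambda>_. 0" _ _ "\<lambda>k. dist (a k) (b k) + dist (c k) (b k)"])
  show "\<forall>\<^sub>F n in F. 0 \<le> dist (a n) (c n)" by simp
  show "\<forall>\<^sub>F n in F. dist (a n) (c n) \<le> dist (a n) (b n) + dist (c n) (b n)"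
    by (intro always_eventually allI) (metis dist_triangle dist_commute)
  show "((\<lambda>_. 0::real) \<longlongrightarrow> 0) F" by simp
  show "((\<lambda>k. dist (a k) (b k) + dist (c k) (b k)) \<longlongrightarrow> 0) F"
    using tendsto_add[OF assms] by simp
qed

definition po :: "('a \<Rightarrow> 'a) \<Rightarrow> 'a \<Rightarrow> nat \<Rightarrow> 'a \<Rightarrow> 'a \<Rightarrow> int \<Rightarrow> 'a" where
  "po f w m p q k = (if k < 0 then iter f k p else if k < int m then iter f k w else iter f (k - int m) q)"

lemma po_pseudo:
  fixes f :: "'a::metric_space \<Rightarrow> 'a"
  assumes "bij f" "e > 0" "4*e \<le> d" "dist w x < e" "dist (iter f (int m) w) y < e"
    "dist p x \<le> e" "dist q y \<le> e"
  shows "pseudo_orbit f d (po f w m p q)"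
  unfolding pseudo_orbit_def
proof
  fix k :: int
  have d0: "d > 0" using assms by simp
  consider "k < -1" | "k = -1" | "0 \<le> k" "k + 1 < int m" | "0 \<le> k" "k + 1 = int m" | "k \<ge> int m"
    by linarith
  then show "dist (f (po f w m p q k)) (po f w m p q (k + 1)) < d"
  proof cases
    case 1
    have "f (iter f k p) = iter f (k + 1) p" by (rule iter_step[OF assms(1)])
    then show ?thesis using d0 1 by (simp add: po_def)
  next
    case 2
    have fp: "f (iter f (-1) p) = p" using iter_step[OF assms(1), of "-1" p] by simp
    show ?thesis
    proof (cases "m = 0")
      case True
      have "dist w y < e" using assms(5) True by simp
      then have "dist p q < 4*e" using assms(4,6,7)
        by (smt (verit) dist_commute dist_triangle)
      then show ?thesis using 2 True fp assms(3) by (simp add: po_def)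
    next
      case False
      have "dist p w < 2*e" using assms(4,6) by (smt (verit) dist_commute dist_triangle)
      then show ?thesis using 2 False fp assms(3,2) by (simp add: po_def)
    qed
  next
    case 3
    have "f (iter f k w) = iter f (k + 1) w" by (rule iter_step[OF assms(1)])
    then show ?thesis using d0 3 by (simp add: po_def)
  next
    case 4
    have "f (iter f k w) = iter f (int m) w" using iter_step[OF assms(1), of k w] 4 by simp
    moreover have "dist (iter f (int m) w) q < 2*e" using assms(5,7)
      by (smt (verit) dist_commute dist_triangle)
    ultimately show ?thesis using 4 assms(3,2) by (simp add: po_def)
  next
    case 5
    have "f (iter f (k - int m) q) = iter f (k + 1 - int m) q"
      using iter_step[OF assms(1), of "k - int m" q] by (simp add: algebra_simps)
    moreover have "po f w m p q k = iter f (k - int m) q" using 5 by (simp add: po_def)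
    moreover have "po f w m p q (k+1) = iter f (k + 1 - int m) q" using 5 by (simp add: po_def)
    ultimately show ?thesis using d0 by simp
  qed
qed

lemma po_limit:
  fixes f :: "'a::metric_space \<Rightarrow> 'a"
  assumes "bij f"
  shows "limit_pseudo_orbit f (po f w m p q)"
  unfolding limit_pseudo_orbit_def
proof
  show "((\<lambda>k. dist (f (po f w m p q k)) (po f w m p q (k + 1))) \<longlongrightarrow> 0) at_top"
  proof (rule tendsto_eventually)
    show "\<forall>\<^sub>F k in at_top. dist (f (po f w m p q k)) (po f w m p q (k + 1)) = 0"
      unfolding eventually_at_top_linorder
      proof (intro exI[of _ "int m"] allI impI)
        fix k :: int assume "int m \<le> k"
        moreover have "f (iter f (k - int m) q) = iter f (k + 1 - int m) q"
          using iter_step[OF assms, of "k - int m" q] by (simp add: algebra_simps)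
        ultimately show "dist (f (po f w m p q k)) (po f w m p q (k + 1)) = 0"
          by (simp add: po_def)
      qed
  qed
  show "((\<lambda>k. dist (f (po f w m p q k)) (po f w m p q (k + 1))) \<longlongrightarrow> 0) at_bot"
  proof (rule tendsto_eventually)
    show "\<forall>\<^sub>F k in at_bot. dist (f (po f w m p q k)) (po f w m p q (k + 1)) = 0"
      unfolding eventually_at_bot_linorder
      proof (intro exI[of _ "-2"] allI impI)
        fix k :: int assume "k \<le> -2"
        moreover have "f (iter f k p) = iter f (k + 1) p" by (rule iter_step[OF assms])
        ultimately show "dist (f (po f w m p q k)) (po f w m p q (k + 1)) = 0"
          by (simp add: po_def)
      qed
  qed
qed


lemma shift_at_top:
  assumes "((\<lambda>k. h (k - int m)) \<longlongrightarrow> (0::real)) at_top"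
  shows "(h \<longlongrightarrow> 0) at_top"
proof -
  have fl: "filterlim (\<lambda>j::int. int m + j) at_top at_top"
    unfolding filterlim_at_top eventually_at_top_linorder
  proof
    fix Z :: int show "\<exists>N. \<forall>j\<ge>N. Z \<le> int m + j"
      by (rule exI[of _ "Z - int m"]) auto
  qed
  have "((\<lambda>j. h ((int m + j) - int m)) \<longlongrightarrow> 0) at_top"
    using filterlim_compose[OF assms fl] by (simp add: o_def)
  then show ?thesis by simp
qed

lemma core:
  fixes f :: "'a::metric_space \<Rightarrow> 'a"
  assumes bij: "bij f" and c: "c > 0"
    and hexp: "\<forall>u. finite (loc_stable f c u \<inter> loc_unstable f c u)
      \<and> card (loc_stable f c u \<inter> loc_unstable f c u) \<le> n"
    and shad: "\<forall>xs. pseudo_orbit f d xs \<and> limit_pseudo_orbit f xs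
      \<longrightarrow> (\<exists>z. eps_shadows f (c/4) z xs \<and> limit_shadows f z xs)"
    and e: "e > 0" "4*e \<le> d" "4*e \<le> c"
    and w: "dist w x < e" "dist (iter f (int m) w) y < e"
    and Eu: "finite Eu" "Eu \<subseteq> loc_unstable f e x" "\<forall>a\<in>Eu. \<forall>b\<in>Eu. a \<noteq> b \<longrightarrow> a \<notin> unstable_set f b"
    and Es: "finite Es" "Es \<subseteq> loc_stable f e y" "\<forall>a\<in>Es. \<forall>b\<in>Es. a \<noteq> b \<longrightarrow> a \<notin> stable_set f b"
  shows "card Eu * card Es \<le> n"
proof (cases "Eu = {} \<or> Es = {}")
  case True then show ?thesis by auto
next
  case False
  then obtain p0 q0 where p0: "p0 \<in> Eu" and q0: "q0 \<in> Es" by auto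
  have pu: "dist (iter f k p) (iter f k x) \<le> e" if "p \<in> Eu" "k \<le> 0" for p k
    using Eu(2) that unfolding loc_unstable_def by auto
  have qs: "dist (iter f k q) (iter f k y) \<le> e" if "q \<in> Es" "k \<ge> 0" for q k
    using Es(2) that unfolding loc_stable_def by auto
  have "\<forall>pq\<in>Eu \<times> Es. \<exists>z. eps_shadows f (c/4) z (po f w m (fst pq) (snd pq))
      \<and> limit_shadows f z (po f w m (fst pq) (snd pq))"
  proof
    fix pq assume pq: "pq \<in> Eu \<times> Es"
    have "dist (fst pq) x \<le> e" using pu[of "fst pq" 0] pq by auto
    moreover have "dist (snd pq) y \<le> e" using qs[of "snd pq" 0] pq by auto
    ultimately have "pseudo_orbit f d (po f w m (fst pq) (snd pq))"
      using po_pseudo[OF bij e(1,2) w] by blast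
    then show "\<exists>z. eps_shadows f (c/4) z (po f w m (fst pq) (snd pq))
      \<and> limit_shadows f z (po f w m (fst pq) (snd pq))"
      using shad po_limit[OF bij] by blast
  qed
  from bchoice[OF this] obtain Z where Z0: "\<forall>pq\<in>Eu \<times> Es. eps_shadows f (c/4) (Z pq) (po f w m (fst pq) (snd pq))
      \<and> limit_shadows f (Z pq) (po f w m (fst pq) (snd pq))" by blast
  have Z: "eps_shadows f (c/4) (Z pq) (po f w m (fst pq) (snd pq))
      \<and> limit_shadows f (Z pq) (po f w m (fst pq) (snd pq))" if "pq \<in> Eu \<times> Es" for pq
    using Z0 that by blast
  have Zu: "((\<lambda>k. dist (iter f k (Z (p,q))) (iter f k p)) \<longlongrightarrow> 0) at_bot"
    if "p \<in> Eu" "q \<in> Es" for p q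
  proof -
    have lim: "((\<lambda>k. dist (iter f k (Z (p,q))) (po f w m p q k)) \<longlongrightarrow> 0) at_bot"
      using Z[of "(p,q)"] that unfolding limit_shadows_def by auto
    have ev: "\<forall>\<^sub>F k in at_bot. dist (iter f k (Z (p,q))) (po f w m p q k)
        = dist (iter f k (Z (p,q))) (iter f k p)"
      unfolding eventually_at_bot_linorder by (rule exI[of _ "-1"]) (simp add: po_def)
    show ?thesis using lim unfolding tendsto_cong[OF ev] .
  qed
  have Zs: "((\<lambda>k. dist (iter f k (Z (p,q))) (iter f (k - int m) q)) \<longlongrightarrow> 0) at_top"
    if "p \<in> Eu" "q \<in> Es" for p q
  proof -
    have lim: "((\<lambda>k. dist (iter f k (Z (p,q))) (po f w m p q k)) \<longlongrightarrow> 0) at_top"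
      using Z[of "(p,q)"] that unfolding limit_shadows_def by auto
    have ev: "\<forall>\<^sub>F k in at_top. dist (iter f k (Z (p,q))) (po f w m p q k)
        = dist (iter f k (Z (p,q))) (iter f (k - int m) q)"
      unfolding eventually_at_top_linorder by (rule exI[of _ "int m"]) (simp add: po_def)
    show ?thesis using lim unfolding tendsto_cong[OF ev] .
  qed
  have inj: "inj_on Z (Eu \<times> Es)"
  proof (rule inj_onI)
    fix a b assume a: "a \<in> Eu \<times> Es" and b: "b \<in> Eu \<times> Es" and eq: "Z a = Z b"
    obtain p q p' q' where ab: "a = (p,q)" "b = (p',q')" by fastforce
    have pp: "p \<in> Eu" "p' \<in> Eu" "q \<in> Es" "q' \<in> Es" using a b ab by auto
    have "((\<lambda>k. dist (iter f k p) (iter f k p')) \<longlongrightarrow> 0) at_bot"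
      using dist_tri_tendsto[of "\<lambda>k. iter f k p" "\<lambda>k. iter f k (Z a)" at_bot "\<lambda>k. iter f k p'"]
        Zu[of p q] Zu[of p' q'] pp eq ab by (simp add: dist_commute)
    then have "p = p'" using Eu(3) pp unfolding unstable_set_def by blast
    have "((\<lambda>k. dist (iter f (k - int m) q) (iter f (k - int m) q')) \<longlongrightarrow> 0) at_top"
      using dist_tri_tendsto[of "\<lambda>k. iter f (k - int m) q" "\<lambda>k. iter f k (Z a)" at_top "\<lambda>k. iter f (k - int m) q'"]
        Zs[of p q] Zs[of p' q'] pp eq ab by (simp add: dist_commute)
    then have "((\<lambda>k. dist (iter f k q) (iter f k q')) \<longlongrightarrow> 0) at_top"
      by (rule shift_at_top[where h="\<lambda>k. dist (iter f k q) (iter f k q')"])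
    then have "q = q'" using Es(3) pp unfolding stable_set_def by blast
    show "a = b" using ab \<open>p = p'\<close> \<open>q = q'\<close> by simp
  qed
  define u where "u = Z (p0, q0)"
  have close: "dist (iter f k (Z (p,q))) (iter f k u) \<le> c" if "p \<in> Eu" "q \<in> Es" for p q k
  proof -
    have s1: "dist (iter f k (Z (p,q))) (po f w m p q k) < c/4"
      using Z[of "(p,q)"] that unfolding eps_shadows_def by auto
    have s2: "dist (iter f k u) (po f w m p0 q0 k) < c/4"
      using Z[of "(p0,q0)"] p0 q0 unfolding eps_shadows_def u_def by auto
    have s3: "dist (po f w m p q k) (po f w m p0 q0 k) \<le> 2*e"
    proof -
      consider "k < 0" | "\<not> k < 0" "k < int m" | "\<not> k < int m" by linarith
      then show ?thesis
      proof cases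
        case 1
        have "dist (iter f k p) (iter f k p0) \<le> 2*e"
        proof -
          have "dist (iter f k p) (iter f k p0) \<le> dist (iter f k p) (iter f k x) + dist (iter f k p0) (iter f k x)"
            by (rule dist_triangle2)
          then show ?thesis using pu[of p k] pu[of p0 k] 1 that p0 by linarith
        qed
        then show ?thesis using 1 by (simp add: po_def)
      next
        case 2 then show ?thesis using e by (simp add: po_def)
      next
        case 3
        have "dist (iter f (k - int m) q) (iter f (k - int m) q0) \<le> 2*e"
        proof -
          have "dist (iter f (k - int m) q) (iter f (k - int m) q0) \<le> dist (iter f (k - int m) q) (iter f (k - int m) y) + dist (iter f (k - int m) q0) (iter f (k - int m) y)"
            by (rule dist_triangle2)
          then show ?thesis using qs[of q "k - int m"] qs[of q0 "k - int m"] 3 that q0 by linarith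
        qed
        then show ?thesis using 3 e by (simp add: po_def)
      qed
    qed
    have "dist (iter f k (Z (p,q))) (iter f k u) \<le> dist (iter f k (Z (p,q))) (po f w m p q k)
       + dist (po f w m p q k) (po f w m p0 q0 k) + dist (iter f k u) (po f w m p0 q0 k)"
      using dist_triangle[of "iter f k (Z (p,q))" "iter f k u" "po f w m p q k"]
        dist_triangle2[of "po f w m p q k" "iter f k u" "po f w m p0 q0 k"] by linarith
    then show ?thesis using s1 s2 s3 e by linarith
  qed
  have sub: "Z ` (Eu \<times> Es) \<subseteq> loc_stable f c u \<inter> loc_unstable f c u"
    using close unfolding loc_stable_def loc_unstable_def by auto
  have "card Eu * card Es = card (Z ` (Eu \<times> Es))"
    by (simp add: card_image[OF inj] card_cartesian_product)
  also have "\<dots> \<le> card (loc_stable f c u \<inter> loc_unstable f c u)"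
    using card_mono[OF _ sub] hexp by blast
  also have "\<dots> \<le> n" using hexp by blast
  finally show ?thesis .
qed


lemma sup_prod:
  fixes A B :: "nat set"
  assumes "a0 \<in> A" "b0 \<in> B" "a0 \<ge> 1" "b0 \<ge> 1" "\<forall>a\<in>A. \<forall>b\<in>B. a*b \<le> n"
  shows "Sup (enat ` A) * Sup (enat ` B) \<le> enat n"
proof -
  have fA: "finite A"
  proof (rule finite_subset[of A "{..n}"])
    show "A \<subseteq> {..n}"
    proof
      fix a assume "a \<in> A"
      then have "a * b0 \<le> n" using assms by blast
      moreover have "a \<le> a * b0" using assms(4) by simp
      ultimately show "a \<in> {..n}" by (metis le_trans atMost_iff)
    qed
  qed simp
  have fB: "finite B"
  proof (rule finite_subset[of B "{..n}"])
    show "B \<subseteq> {..n}"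
    proof
      fix b assume "b \<in> B"
      then have "a0 * b \<le> n" using assms by blast
      moreover have "b \<le> a0 * b" using assms(3) by simp
      ultimately show "b \<in> {..n}" by (metis le_trans atMost_iff)
    qed
  qed simp
  have finA: "finite (enat ` A)" using fA by simp
  have neA: "enat ` A \<noteq> {}" using assms(1) by blast
  have "Sup (enat ` A) \<in> enat ` A"
    unfolding cSup_eq_Max[OF finA neA] by (rule Max_in[OF finA neA])
  then obtain a where a: "a \<in> A" "Sup (enat ` A) = enat a" by auto
  have finB: "finite (enat ` B)" using fB by simp
  have neB: "enat ` B \<noteq> {}" using assms(2) by blast
  have "Sup (enat ` B) \<in> enat ` B"
    unfolding cSup_eq_Max[OF finB neB] by (rule Max_in[OF finB neB])
  then obtain b where b: "b \<in> B" "Sup (enat ` B) = enat b" by auto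
  show ?thesis using a b assms(5) by simp
qed

theorem theoremC:
  fixes f :: "'a::metric_space \<Rightarrow> 'a" and n :: nat
  assumes "compact (UNIV :: 'a set)"
    and "\<exists>g. homeomorphism UNIV UNIV f g"
    and "n_expansive f n"
    and "L_shadowing f"
  shows "\<exists>e>0. (\<forall>x. num_unstable f x e * num_stable f x e \<le> enat n) \<and>
           (transitive f \<longrightarrow> (\<forall>x y. num_unstable f x e * num_stable f y e \<le> enat n))"
proof -
  obtain g where g: "homeomorphism UNIV UNIV f g" using assms(2) by blast
  have gf: "\<And>x. g (f x) = x" and fg: "\<And>y. f (g y) = y" using g unfolding homeomorphism_def by auto
  have bij: "bij f"
  proof (rule bijI)
    show "inj f" by (rule inj_on_inverseI[of _ g]) (simp add: gf)
    show "surj f" using fg by (metis surj_def)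
  qed
  obtain c where c: "c > 0" and hexp: "\<forall>u. finite (loc_stable f c u \<inter> loc_unstable f c u)
      \<and> card (loc_stable f c u \<inter> loc_unstable f c u) \<le> n"
    using assms(3) unfolding n_expansive_def by blast
  have c4: "c/4 > 0" using c by simp
  obtain d where d: "d > 0" and shad: "\<forall>xs. pseudo_orbit f d xs \<and> limit_pseudo_orbit f xs
      \<longrightarrow> (\<exists>z. eps_shadows f (c/4) z xs \<and> limit_shadows f z xs)"
    using assms(4) c4 unfolding L_shadowing_def by blast
  define e where "e = min (c/4) (d/4)"
  have e: "e > 0" "4*e \<le> d" "4*e \<le> c" using c d unfolding e_def by auto
  have key: "num_unstable f x e * num_stable f y e \<le> enat n"
    if w: "dist w x < e" "dist (iter f (int m) w) y < e" for x y w m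
  proof -
    define A where "A = {card E | E. finite E \<and> E \<subseteq> loc_unstable f e x \<and>
      (\<forall>y\<in>E. \<forall>z\<in>E. y \<noteq> z \<longrightarrow> y \<notin> unstable_set f z)}"
    define B where "B = {card E | E. finite E \<and> E \<subseteq> loc_stable f e y \<and>
      (\<forall>y\<in>E. \<forall>z\<in>E. y \<noteq> z \<longrightarrow> y \<notin> stable_set f z)}"
    have nu: "num_unstable f x e = Sup (enat ` A)" unfolding num_unstable_def A_def
      by (rule arg_cong[where f=Sup]) auto
    have ns: "num_stable f y e = Sup (enat ` B)" unfolding num_stable_def B_def
      by (rule arg_cong[where f=Sup]) auto
    have sx: "{x} \<subseteq> loc_unstable f e x" using e unfolding loc_unstable_def by auto
    have sy: "{y} \<subseteq> loc_stable f e y" using e unfolding loc_stable_def by auto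
    have "1 \<in> A" unfolding A_def using sx by (intro CollectI exI[of _ "{x}"]) simp
    moreover have "1 \<in> B" unfolding B_def using sy by (intro CollectI exI[of _ "{y}"]) simp
    moreover have "\<forall>a\<in>A. \<forall>b\<in>B. a*b \<le> n"
    proof (intro ballI)
      fix a b assume "a \<in> A" "b \<in> B"
      obtain Ea where Ea: "a = card Ea" "finite Ea" "Ea \<subseteq> loc_unstable f e x"
          "\<forall>y\<in>Ea. \<forall>z\<in>Ea. y \<noteq> z \<longrightarrow> y \<notin> unstable_set f z"
        using \<open>a \<in> A\<close> unfolding A_def by auto
      obtain Eb where Eb: "b = card Eb" "finite Eb" "Eb \<subseteq> loc_stable f e y"
          "\<forall>y\<in>Eb. \<forall>z\<in>Eb. y \<noteq> z \<longrightarrow> y \<notin> stable_set f z"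
        using \<open>b \<in> B\<close> unfolding B_def by auto
      show "a * b \<le> n" unfolding Ea(1) Eb(1) by (rule core[OF bij c hexp shad e w Ea(2-4) Eb(2-4)])
    qed
    ultimately show ?thesis unfolding nu ns by (intro sup_prod[of 1 A 1 B]) simp_all
  qed
  show ?thesis
  proof (intro exI[of _ e] conjI allI impI)
    show "e > 0" by (rule e)
    fix x show "num_unstable f x e * num_stable f x e \<le> enat n"
      by (rule key[where x=x and y=x and w=x and m=0]) (simp_all add: e)
  next
    fix x y :: 'a assume tr: "transitive f"
    have balls: "open (ball x e) \<and> ball x e \<noteq> {} \<and> open (ball y e) \<and> ball y e \<noteq> {}"
      using e by auto
    have "\<exists>k::nat. k > 0 \<and> (f ^^ k) ` ball x e \<inter> ball y e \<noteq> {}"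
      using tr balls unfolding transitive_def by (elim allE[of _ "ball x e"] allE[of _ "ball y e"]) simp
    then obtain k where "k > 0" "(f ^^ k) ` ball x e \<inter> ball y e \<noteq> {}" by blast
    then obtain w where "dist x w < e" "dist y ((f ^^ k) w) < e" by auto
    then show "num_unstable f x e * num_stable f y e \<le> enat n"
    proof -
      have "dist w x < e" "dist (iter f (int k) w) y < e"
        using \<open>dist x w < e\<close> \<open>dist y ((f ^^ k) w) < e\<close> by (simp_all add: iter_nat dist_commute)
      then show ?thesis by (rule key)
    qed
  qed
qed

end
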